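(* Let $d,n$ be positive integers and let $\xi_1,\ldots,\xi_n$ be independent Rademacher random variables (uniform on $\{1,-1\}$). Let $\mathbf{u}_1,\ldots,\mathbf{u}_n\in\mathbb{C}^d$ form a tight frame, i.e. $\sum_{i=1}^n\mathbf{u}_i\mathbf{u}_i^*=C\cdot\mathbf{I}$ for some constant $C>0$, and set $\sigma^2=\big\|\sum_{i=1}^n(\mathbf{u}_i\mathbf{u}_i^* )^2\big\|$. Then $$\min_{\varepsilon_1,\ldots,\varepsilon_n\in\{1,-1\}}\Big\|\sum_{i=1}^n\varepsilon_i\mathbf{u}_i\mathbf{u}_i^*\Big\|\le\sqrt{\frac{n}{d}}\cdot\sigma.$$ Moreover, if $\mathbf{u}_1,\ldots,\mathbf{u}_n$ form a unit-norm tight frame, i.e. $\|\mathbf{u}_i\|=1$ for all $i$ and $\sum_{i=1}^n\mathbf{u}_i\mathbf{u}_i^*=\frac{n}{d}\mathbf{I}$, and $d\le n\le 2d-1$, then $$\min_{\varepsilon_1,\ldots,\varepsilon_n\in\{1,-1\}}\Big\|\sum_{i=1}^n\varepsilon_i\mathbf{u}_i\mathbf{u}_i^*\Big\|=\sqrt{\frac{n}{d}}\cdot\sigma.$$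
   Context: $\|\cdot\|$ is the spectral norm. (The left-hand side is the matrix discrepancy $\min_{\varepsilon_i\in\{\pm1\}}\|\sum_i\mathbb{E}[\xi_i]\mathbf{u}_i\mathbf{u}_i^*-\sum_i\varepsilon_i\mathbf{u}_i\mathbf{u}_i^*\|$, with $\mathbb{E}[\xi_i]=0$.) *)

theory Defs
  imports "HOL-Analysis.Analysis"
begin

definition outer :: "complex^'d \<Rightarrow> complex^'d^'d" where
  "outer u = (\<chi> i j. u $ i * cnj (u $ j))"

definition spec_norm :: "complex^'d^'d \<Rightarrow> real" where
  "spec_norm A = onorm (\<lambda>x. A *v x)"

definition sign_disc :: "nat \<Rightarrow> (nat \<Rightarrow> complex^'d) \<Rightarrow> real" where
  "sign_disc n u = Min ((\<lambda>\<epsilon>. spec_norm (\<Sum>i<n. \<epsilon> i *\<^sub>R outer (u i)))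
                        ` ({..<n} \<rightarrow>\<^sub>E {1, -1::real}))"

end

theory Submission
  imports Defs
begin

lemma mat_mult_v: "mat (complex_of_real c) *v x = c *\<^sub>R (x::complex^'d)"
proof -
  have "\<And>i. (\<Sum>j\<in>UNIV. (if i = j then complex_of_real c else 0) * x$j) = complex_of_real c * x$i"
    by (simp add: if_distrib[where f="\<lambda>a. a * _"] cong: if_cong)
  then show ?thesis
    by (simp only: vec_eq_iff vector_scaleR_component) (simp add: matrix_vector_mult_def mat_def scaleR_conv_of_real)
qed
lemma spec_norm_mat: "spec_norm (mat (complex_of_real c) :: complex^'d^'d) = \<bar>c\<bar>"
proof -
  have "onorm (\<lambda>x::complex^'d. c *\<^sub>R x) = \<bar>c\<bar> * onorm (\<lambda>x::complex^'d. x)"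
    by (rule onorm_scaleR) (rule bounded_linear_ident)
  then show ?thesis unfolding spec_norm_def mat_mult_v using onorm_id[where 'a="complex^'d"] by simp
qed
lemma norm_axis_c: "norm (axis j (1::complex) :: complex^'d) = 1"
proof -
  have "axis j (1::complex) \<in> (Basis :: (complex^'d) set)" by (auto simp: Basis_vec_def)
  then show ?thesis by (rule norm_Basis)
qed
lemma diag_le: "norm (A $ j $ j) \<le> spec_norm (A :: complex^'d^'d)"
proof -
  have "(A *v axis j 1) $ j = A $ j $ j"
    by (simp add: matrix_vector_mult_def axis_def if_distrib[where f="\<lambda>a. _ * a"] cong: if_cong)
  hence "norm (A $ j $ j) \<le> norm (A *v axis j 1)" by (metis Finite_Cartesian_Product.norm_nth_le)
  also have "\<dots> = norm (A *v axis j 1) / norm (axis j (1::complex) :: complex^'d)" by (simp add: norm_axis_c)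
  also have "\<dots> \<le> spec_norm A" unfolding spec_norm_def by (rule le_onorm) simp
  finally show ?thesis .
qed
lemma outer_v: "outer u *v x = (\<chi> j. u$j * (\<Sum>k\<in>UNIV. cnj (u$k) * x$k))"
  by (simp add: vec_eq_iff outer_def matrix_vector_mult_def sum_distrib_left mult.assoc)
lemma normsq: "(\<Sum>k\<in>UNIV. complex_of_real ((cmod (u$k))\<^sup>2)) = complex_of_real ((norm (u::complex^'d))\<^sup>2)"
proof -
  have "(norm u)\<^sup>2 = (\<Sum>k\<in>UNIV. (cmod (u$k))\<^sup>2)"
    by (simp add: norm_vec_def L2_set_def sum_nonneg)
  then show ?thesis by simp
qed
lemma outer_sq: "outer u ** outer u = ((norm (u::complex^'d))\<^sup>2) *\<^sub>R outer u"
proof -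
  have "\<And>j k. (\<Sum>m\<in>UNIV. u $ j * cnj (u $ m) * (u $ m * cnj (u $ k))) = 
     u$j * cnj (u$k) * (\<Sum>m\<in>UNIV. complex_of_real ((cmod (u$m))\<^sup>2))"
  proof -
    fix j k
    have "\<And>m. u$j * cnj(u$m) * (u$m * cnj(u$k)) = u$j*cnj(u$k) * complex_of_real((cmod(u$m))\<^sup>2)"
      by (simp only: complex_norm_square) (simp add: algebra_simps)
    then show "?thesis j k" by (simp only: sum_distrib_left)
  qed
  then show ?thesis
    unfolding normsq
    by (simp only: vec_eq_iff vector_scaleR_component) (simp add: outer_def matrix_matrix_mult_def scaleR_conv_of_real)
qed
lemma scaleR_mv: "(r *\<^sub>R A) *v x = r *\<^sub>R (A *v (x::complex^'d))" for A :: "complex^'d^'d"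
  unfolding matrix_vector_mult_def
  by (simp only: vec_eq_iff vector_scaleR_component vec_lambda_beta)
     (simp add: scaleR_conv_of_real sum_distrib_left mult.assoc)
lemma sum_mv: "(\<Sum>i\<in>I. r i *\<^sub>R A i) *v x = (\<Sum>i\<in>I. r i *\<^sub>R (A i *v (x::complex^'d)))"
  for A :: "'i \<Rightarrow> complex^'d^'d"
proof (induction I rule: infinite_finite_induct)
  case (insert a F) then show ?case by (simp add: matrix_vector_mult_add_rdistrib scaleR_mv)
qed auto
lemma lower: assumes "x \<noteq> 0" "M *v x = c *\<^sub>R x" shows "\<bar>c\<bar> \<le> spec_norm (M::complex^'d^'d)"
proof -
  have "norm (M *v x) / norm x \<le> spec_norm M" unfolding spec_norm_def by (rule le_onorm) simp
  then show ?thesis using assms by simp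
qed
lemma outer_diag: "outer u $ j $ j = complex_of_real ((cmod (u$j))\<^sup>2)"
  unfolding outer_def by (simp only: vec_lambda_beta complex_norm_square)
lemma norm_sq_sum: "(norm (u::complex^'d))\<^sup>2 = (\<Sum>k\<in>UNIV. (cmod (u$k))\<^sup>2)"
  by (simp add: norm_vec_def L2_set_def sum_nonneg)
lemma orth_exists:
  fixes u :: "nat \<Rightarrow> complex^'d"
  assumes "finite N" "card N < CARD('d)"
  shows "\<exists>x::complex^'d. x \<noteq> 0 \<and> (\<forall>i\<in>N. (\<Sum>k\<in>UNIV. cnj (u i$k) * x$k) = 0)"
proof -
  define S where "S = u ` N \<union> (\<lambda>i. (\<chi> k. \<i> * u i$k)) ` N"
  have fS: "finite S" using assms(1) by (simp add: S_def)
  have "card S \<le> card (u ` N) + card ((\<lambda>i. (\<chi> k. \<i> * u i$k)) ` N)"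
    unfolding S_def by (rule card_Un_le)
  also have "\<dots> \<le> card N + card N" by (intro add_mono card_image_le assms(1))
  finally have "card S < DIM(complex^'d)" using assms(2) by simp
  moreover have "dim S \<le> card S" by (rule dim_le_card[OF span_superset fS])
  ultimately have "dim S < DIM(complex^'d)" by simp
  then obtain a :: "complex^'d" where a: "a \<noteq> 0" "span S \<subseteq> {x. a \<bullet> x = 0}"
    using lowdim_subset_hyperplane by blast
  have "(\<Sum>k\<in>UNIV. cnj (u i$k) * a$k) = 0" if i: "i \<in> N" for i
  proof -
    have "u i \<in> span S" "(\<chi> k. \<i> * u i$k) \<in> span S" using i by (auto simp: S_def intro: span_base)
    then have h1: "a \<bullet> u i = 0" and h2: "a \<bullet> (\<chi> k. \<i> * u i$k) = 0" using a(2) by auto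
    show ?thesis
    proof (rule complex_eqI)
      show "Re (\<Sum>k\<in>UNIV. cnj (u i$k) * a$k) = Re 0"
        using h1 by (simp add: inner_vec_def inner_complex_def Re_sum algebra_simps)
      show "Im (\<Sum>k\<in>UNIV. cnj (u i$k) * a$k) = Im 0"
        using h2 by (simp add: inner_vec_def inner_complex_def Im_sum algebra_simps sum_subtractf)
    qed
  qed
  then show ?thesis using a(1) by blast
qed
lemma disc_le_plus:
  assumes "(\<Sum>i<n. outer (u i)) = mat (complex_of_real C)"
  shows "sign_disc n u \<le> \<bar>C\<bar>"
proof -
  define e where "e = restrict (\<lambda>i. 1::real) {..<n}"
  have e: "e \<in> {..<n} \<rightarrow>\<^sub>E {1, -1::real}" by (simp add: e_def)
  have "(\<Sum>i<n. e i *\<^sub>R outer (u i)) = (\<Sum>i<n. outer (u i))"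
    by (rule sum.cong) (auto simp: e_def)
  hence "spec_norm (\<Sum>i<n. e i *\<^sub>R outer (u i)) = \<bar>C\<bar>" using assms spec_norm_mat by simp
  moreover have "finite ({..<n} \<rightarrow>\<^sub>E {1, -1::real})" by (simp add: finite_PiE)
  ultimately show ?thesis unfolding sign_disc_def using e by (metis (no_types, lifting) Min_le finite_imageI image_eqI)
qed

lemma part1:
  fixes u :: "nat \<Rightarrow> complex^'d"
  assumes n: "n \<ge> 1" and C: "C > 0" and fr: "(\<Sum>i<n. outer (u i)) = mat (complex_of_real C)"
  shows "sign_disc n u \<le> sqrt (real n / real CARD('d)) * sqrt (spec_norm (\<Sum>i<n. outer (u i) ** outer (u i)))"
proof -
  define w where "w i = (norm (u i))\<^sup>2" for i
  define S where "S = (\<Sum>i<n. outer (u i) ** outer (u i))"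
  define d where "d = real CARD('d)"
  have dpos: "d > 0" by (simp add: d_def)
  have col: "(\<Sum>i<n. (cmod (u i$j))\<^sup>2) = C" for j
  proof -
    have "(\<Sum>i<n. outer (u i)) $ j $ j = complex_of_real C" using fr by (simp add: mat_def)
    moreover have "(\<Sum>i<n. outer (u i)) $ j $ j = complex_of_real (\<Sum>i<n. (cmod (u i$j))\<^sup>2)"
      by (simp only: sum_component outer_diag of_real_sum)
    ultimately show ?thesis by (metis of_real_eq_iff)
  qed
  have sw: "(\<Sum>i<n. w i) = d * C"
  proof -
    have "(\<Sum>i<n. w i) = (\<Sum>i<n. \<Sum>k\<in>UNIV. (cmod (u i$k))\<^sup>2)" by (simp add: w_def norm_sq_sum)
    also have "\<dots> = (\<Sum>k\<in>UNIV. \<Sum>i<n. (cmod (u i$k))\<^sup>2)" by (rule sum.swap)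
    also have "\<dots> = d * C" by (simp add: col d_def)
    finally show ?thesis .
  qed
  have Sdiag: "norm (S $ j $ j) = (\<Sum>i<n. w i * (cmod (u i$j))\<^sup>2)" for j
  proof -
    have "S $ j $ j = complex_of_real (\<Sum>i<n. w i * (cmod (u i$j))\<^sup>2)"
      unfolding S_def outer_sq w_def
      by (simp only: sum_component vector_scaleR_component outer_diag) (simp add: scaleR_conv_of_real)
    then have "norm (S $ j $ j) = \<bar>\<Sum>i<n. w i * (cmod (u i$j))\<^sup>2\<bar>" by (simp only: norm_of_real)
    then show ?thesis by (simp add: sum_nonneg w_def)
  qed
  have "(\<Sum>j\<in>UNIV. norm (S $ j $ j)) = (\<Sum>i<n. (w i)\<^sup>2)"
  proof -
    have "(\<Sum>j\<in>UNIV. norm (S $ j $ j)) = (\<Sum>j\<in>UNIV. \<Sum>i<n. w i * (cmod (u i$j))\<^sup>2)" by (simp add: Sdiag)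
    also have "\<dots> = (\<Sum>i<n. \<Sum>j\<in>UNIV. w i * (cmod (u i$j))\<^sup>2)" by (rule sum.swap)
    also have "\<dots> = (\<Sum>i<n. (w i)\<^sup>2)" 
    proof (rule sum.cong)
      fix i
      have "(\<Sum>j\<in>UNIV. w i * (cmod (u i$j))\<^sup>2) = w i * (\<Sum>j\<in>UNIV. (cmod (u i$j))\<^sup>2)"
        by (simp add: sum_distrib_left)
      also have "\<dots> = (w i)\<^sup>2" unfolding w_def norm_sq_sum[of "u i", symmetric] by (simp add: power2_eq_square)
      finally show "(\<Sum>j\<in>UNIV. w i * (cmod (u i$j))\<^sup>2) = (w i)\<^sup>2" .
    qed simp
    finally show ?thesis .
  qed
  moreover have "(\<Sum>j\<in>UNIV. norm (S $ j $ j)) \<le> d * spec_norm S"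
    using sum_bounded_above[of UNIV "\<lambda>j. norm (S $ j $ j)" "spec_norm S"] diag_le[of S] by (simp add: d_def)
  ultimately have A: "(\<Sum>i<n. (w i)\<^sup>2) \<le> d * spec_norm S" by simp
  have B: "(\<Sum>i<n. w i)\<^sup>2 \<le> (\<Sum>i<n. (w i)\<^sup>2) * n" using sum_squared_le_sum_of_squares[of w "{..<n}"] by simp
  have "(d * C)\<^sup>2 \<le> d * spec_norm S * n" using A B sw
    by (metis (no_types, lifting) of_nat_0_le_iff mult_right_mono order_trans)
  hence "d * (d * C\<^sup>2) \<le> d * (n * spec_norm S)" by (simp add: power2_eq_square algebra_simps)
  hence "d * C\<^sup>2 \<le> n * spec_norm S" using dpos by simp
  hence "C\<^sup>2 \<le> (n / d) * spec_norm S" using dpos by (simp add: field_simps)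
  hence "sqrt (C\<^sup>2) \<le> sqrt ((n / d) * spec_norm S)" by (rule real_sqrt_le_mono)
  hence "C \<le> sqrt (n / d) * sqrt (spec_norm S)" using C by (simp only: real_sqrt_mult real_sqrt_abs abs_of_pos)
  moreover have "sign_disc n u \<le> C" using disc_le_plus[OF fr] C by simp
  ultimately show ?thesis by (simp add: S_def d_def)
qed
lemma key_lower:
  fixes u :: "nat \<Rightarrow> complex^'d" and e :: "nat \<Rightarrow> real"
  assumes fr: "(\<Sum>i<n. outer (u i)) = mat (complex_of_real c)"
    and sm: "n \<le> 2 * CARD('d) - 1" and e: "e \<in> {..<n} \<rightarrow>\<^sub>E {1, -1::real}"
  shows "\<bar>c\<bar> \<le> spec_norm (\<Sum>i<n. e i *\<^sub>R outer (u i))"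
proof -
  define Nn where "Nn = {i. i < n \<and> e i = -1}"
  define Pp where "Pp = {i. i < n \<and> e i = 1}"
  have ev: "e i = 1 \<or> e i = -1" if "i < n" for i using e that by auto
  have "{..<n} = Nn \<union> Pp" "Nn \<inter> Pp = {}" using ev by (auto simp: Nn_def Pp_def)
  hence "card Nn + card Pp = n"
    by (metis card_Un_disjoint card_lessThan finite_Un finite_lessThan)
  hence cases: "card Nn < CARD('d) \<or> card Pp < CARD('d)" using sm zero_less_card_finite[where 'a='d] by arith
  have fin: "finite Nn" "finite Pp" by (auto simp: Nn_def Pp_def)
  let ?M = "\<Sum>i<n. e i *\<^sub>R outer (u i)"
  have main: "\<bar>c\<bar> \<le> spec_norm ?M" if Q: "card Q < CARD('d)" "finite Q"
    and s: "s = 1 \<or> s = -1" and QQ: "\<And>i. i < n \<Longrightarrow> i \<notin> Q \<Longrightarrow> e i = s" for Q s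
  proof -
    obtain x :: "complex^'d" where x: "x \<noteq> 0" "\<forall>i\<in>Q. (\<Sum>k\<in>UNIV. cnj (u i$k) * x$k) = 0"
      using orth_exists[OF Q(2,1)] by blast
    have "e i *\<^sub>R (outer (u i) *v x) = s *\<^sub>R (outer (u i) *v x)" if "i < n" for i
    proof (cases "i \<in> Q")
      case True
      then have "outer (u i) *v x = 0" using x(2) by (simp add: outer_v vec_eq_iff)
      then show ?thesis by simp
    qed (simp add: QQ that)
    hence "?M *v x = (\<Sum>i<n. s *\<^sub>R (outer (u i) *v x))" unfolding sum_mv by (intro sum.cong) auto
    also have "\<dots> = s *\<^sub>R ((\<Sum>i<n. outer (u i)) *v x)"
      using sum_mv[of "\<lambda>_. 1" "\<lambda>i. outer (u i)" "{..<n}" x] by (simp add: scaleR_sum_right)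
    also have "\<dots> = (s * c) *\<^sub>R x" using fr by (simp add: mat_mult_v)
    finally have "\<bar>s * c\<bar> \<le> spec_norm ?M" by (rule lower[OF x(1)])
    then show ?thesis using s by (auto simp: abs_mult)
  qed
  from cases show ?thesis
  proof
    assume "card Nn < CARD('d)"
    then show ?thesis by (rule main[of Nn 1]) (use fin ev in \<open>auto simp: Nn_def\<close>)
  next
    assume "card Pp < CARD('d)"
    then show ?thesis by (rule main[of Pp "-1"]) (use fin ev in \<open>auto simp: Pp_def\<close>)
  qed
qed

lemma part2:
  fixes u :: "nat \<Rightarrow> complex^'d"
  assumes n: "n \<ge> 1" and un: "\<forall>i<n. norm (u i) = 1"
    and fr: "(\<Sum>i<n. outer (u i)) = mat (complex_of_real (real n / real CARD('d)))"
    and sm: "n \<le> 2 * CARD('d) - 1"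
  shows "sign_disc n u = sqrt (real n / real CARD('d)) * sqrt (spec_norm (\<Sum>i<n. outer (u i) ** outer (u i)))"
proof -
  define c where "c = real n / real CARD('d)"
  have cpos: "c > 0" using n by (simp add: c_def)
  have "(\<Sum>i<n. outer (u i) ** outer (u i)) = (\<Sum>i<n. outer (u i))"
    by (rule sum.cong) (auto simp: outer_sq un)
  also have "\<dots> = mat (complex_of_real c)" using fr by (simp only: c_def)
  finally have "spec_norm (\<Sum>i<n. outer (u i) ** outer (u i)) = c" using cpos by (simp only: spec_norm_mat abs_of_pos)
  hence rhs: "sqrt (real n / real CARD('d)) * sqrt (spec_norm (\<Sum>i<n. outer (u i) ** outer (u i))) = c"
    using cpos by (simp add: c_def real_sqrt_mult[symmetric])
  have fr': "(\<Sum>i<n. outer (u i)) = mat (complex_of_real c)" using fr by (simp add: c_def)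
  have le: "sign_disc n u \<le> c" using disc_le_plus[OF fr'] cpos by simp
  have fin: "finite ({..<n} \<rightarrow>\<^sub>E {1, -1::real})" by (simp add: finite_PiE)
  have ne: "({..<n} \<rightarrow>\<^sub>E {1, -1::real}) \<noteq> {}" by (simp add: PiE_eq_empty_iff)
  have ge: "c \<le> sign_disc n u"
    unfolding sign_disc_def
  proof (subst Min_ge_iff)
    show "\<forall>a\<in>(\<lambda>\<epsilon>. spec_norm (\<Sum>i<n. \<epsilon> i *\<^sub>R outer (u i))) ` ({..<n} \<rightarrow>\<^sub>E {1, -1}). c \<le> a"
      using key_lower[OF fr' sm] cpos by fastforce
  qed (use fin ne in auto)
  show ?thesis using le ge rhs by simp
qed

theorem theorem1p5:
  fixes n :: nat and u :: "nat \<Rightarrow> complex^'d"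
  assumes "n \<ge> 1"
  shows "((\<exists>C::real. C > 0 \<and> (\<Sum>i<n. outer (u i)) = mat (complex_of_real C)) \<longrightarrow>
           sign_disc n u \<le> sqrt (real n / real CARD('d)) * sqrt (spec_norm (\<Sum>i<n. outer (u i) ** outer (u i))))
       \<and> (((\<forall>i<n. norm (u i) = 1) \<and> (\<Sum>i<n. outer (u i)) = mat (complex_of_real (real n / real CARD('d)))
            \<and> CARD('d) \<le> n \<and> n \<le> 2 * CARD('d) - 1) \<longrightarrow>
           sign_disc n u = sqrt (real n / real CARD('d)) * sqrt (spec_norm (\<Sum>i<n. outer (u i) ** outer (u i))))"
  using part1[OF assms] part2[OF assms] by blast

end
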